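(* Let $\mathbb{X}\subseteq\mathbb{P}^2$ be a $\Bbbk$-configuration of type $(1,2,\dots,s)$ with $s\ge2$, defined by subsets $\mathbb{X}_1,\dots,\mathbb{X}_s$ and lines $\mathbb{L}_1,\dots,\mathbb{L}_s$, with $\mathbb{X}_1=\{P\}$ and $\mathbb{X}_2=\{Q_1,Q_2\}$. If $\mathbb{L}$ is a line with $|\mathbb{L}\cap\mathbb{X}|=s$ and $\mathbb{L}\notin\{\mathbb{L}_1,\dots,\mathbb{L}_s\}$, then $\mathbb{L}$ is either the line through $P$ and $Q_1$ or the line through $P$ and $Q_2$.
   Context: $\Bbbk$ is an algebraically closed field. A $\Bbbk$-configuration of type $(d_1,\dots,d_s)$ is a finite set $\mathbb{X}\subseteq\mathbb{P}^2$ for which there exist integers $1\le d_1<\cdots<d_s$, subsets $\mathbb{X}_1,\dots,\mathbb{X}_s$ of $\mathbb{X}$ and distinct lines $\mathbb{L}_1,\dots,\mathbb{L}_s\subseteq\mathbb{P}^2$ such that (1) $\mathbb{X}=\bigcup_{i=1}^s\mathbb{X}_i$; (2) $|\mathbb{X}_i|=d_i$ and $\mathbb{X}_i\subseteq\mathbb{L}_i$ for each $i$; (3) for $1<i\le s$, $\mathbb{L}_i$ contains no point of $\mathbb{X}_j$ for any $j<i$. We say $\mathbb{X}$ is defined by these subsets and lines. *)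

theory Defs
  imports "HOL-Computational_Algebra.Polynomial"
begin

type_synonym 'k vec3 = "'k \<times> 'k \<times> 'k"

(* A point of P^2(k): the set of nonzero scalar multiples of a nonzero vector in k^3 *)
definition proj_class :: "'k::field vec3 \<Rightarrow> 'k vec3 set" where
  "proj_class v = {(c * fst v, c * fst (snd v), c * snd (snd v)) | c. c \<noteq> 0}"

definition proj_points :: "'k::field vec3 set set" where
  "proj_points = {proj_class v | v. v \<noteq> (0, 0, 0)}"

definition line_of :: "'k::field vec3 \<Rightarrow> 'k vec3 set set" where
  "line_of a = {P \<in> proj_points. \<forall>v\<in>P.
      fst a * fst v + fst (snd a) * fst (snd v) + snd (snd a) * snd (snd v) = 0}"

definition is_line :: "'k::field vec3 set set \<Rightarrow> bool" where
  "is_line L \<longleftrightarrow> (\<exists>a. a \<noteq> (0, 0, 0) \<and> L = line_of a)"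

definition line_through :: "'k::field vec3 set \<Rightarrow> 'k vec3 set \<Rightarrow> 'k vec3 set set" where
  "line_through P Q = (THE L. is_line L \<and> P \<in> L \<and> Q \<in> L)"

definition kconfig_defined_by ::
  "'k::field vec3 set set \<Rightarrow> nat \<Rightarrow> (nat \<Rightarrow> nat) \<Rightarrow> (nat \<Rightarrow> 'k vec3 set set)
     \<Rightarrow> (nat \<Rightarrow> 'k vec3 set set) \<Rightarrow> bool" where
  "kconfig_defined_by X s d Xs Ls \<longleftrightarrow>
     X \<subseteq> proj_points \<and> finite X \<and>
     1 \<le> d 1 \<and> (\<forall>i\<in>{1..s}. \<forall>j\<in>{1..s}. i < j \<longrightarrow> d i < d j) \<and>
     X = (\<Union>i\<in>{1..s}. Xs i) \<and>
     (\<forall>i\<in>{1..s}. is_line (Ls i) \<and> card (Xs i) = d i \<and> Xs i \<subseteq> Ls i) \<and>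
     inj_on Ls {1..s} \<and>
     (\<forall>i\<in>{1..s}. \<forall>j\<in>{1..s}. j < i \<longrightarrow> Ls i \<inter> Xs j = {})"

end

theory Submission
  imports Defs
begin

definition dot3 :: "'k::field vec3 \<Rightarrow> 'k vec3 \<Rightarrow> 'k" where
  "dot3 a v = fst a * fst v + fst (snd a) * fst (snd v) + snd (snd a) * snd (snd v)"

definition cross3 :: "'k::field vec3 \<Rightarrow> 'k vec3 \<Rightarrow> 'k vec3" where
  "cross3 v w = (fst (snd v) * snd (snd w) - snd (snd v) * fst (snd w),
                 snd (snd v) * fst w - fst v * snd (snd w),
                 fst v * fst (snd w) - fst (snd v) * fst w)"

definition sc3 :: "'k::field \<Rightarrow> 'k vec3 \<Rightarrow> 'k vec3" where
  "sc3 c v = (c * fst v, c * fst (snd v), c * snd (snd v))"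

lemma par3:
  fixes a c :: "'k::field vec3"
  assumes "c \<noteq> (0,0,0)" "cross3 a c = (0,0,0)"
  shows "\<exists>s. a = sc3 s c"
proof -
  obtain a1 a2 a3 where a: "a = (a1,a2,a3)" by (cases a) auto
  obtain c1 c2 c3 where c: "c = (c1,c2,c3)" by (cases c) auto
  have e: "a2*c3 = a3*c2" "a3*c1 = a1*c3" "a1*c2 = a2*c1"
    using assms(2) by (auto simp: a c cross3_def)
  show ?thesis
  proof (cases "c1 = 0")
    case False
    have "a = sc3 (a1/c1) c" using e False
      by (auto simp: a c sc3_def field_simps)
    then show ?thesis by blast
  next
    case z1: True
    show ?thesis
    proof (cases "c2 = 0")
      case False
      have "a = sc3 (a2/c2) c" using e False z1
        by (auto simp: a c sc3_def field_simps)
      then show ?thesis by blast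
    next
      case True
      with z1 assms(1) c have "c3 \<noteq> 0" by auto
      have "a = sc3 (a3/c3) c" using e \<open>c3 \<noteq> 0\<close> z1 True
        by (auto simp: a c sc3_def field_simps)
      then show ?thesis by blast
    qed
  qed
qed

lemma triple_cross:
  fixes a v w :: "'k::field vec3"
  shows "cross3 a (cross3 v w) = (fst v * dot3 a w - fst w * dot3 a v,
     fst (snd v) * dot3 a w - fst (snd w) * dot3 a v,
     snd (snd v) * dot3 a w - snd (snd w) * dot3 a v)"
  by (cases a; cases v; cases w) (simp add: cross3_def dot3_def algebra_simps)

lemma dot_sc: "dot3 (sc3 s c) u = s * dot3 c u"
  by (simp add: dot3_def sc3_def algebra_simps)

lemma mem_proj_class: "v \<in> proj_class v"
  unfolding proj_class_def by (cases v) (auto intro: exI[of _ 1])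

lemma proj_class_sc:
  assumes "t \<noteq> 0" shows "proj_class (sc3 t v) = proj_class v"
proof -
  have "proj_class (sc3 t v) \<subseteq> proj_class v"
  proof
    fix x assume "x \<in> proj_class (sc3 t v)"
    then obtain c where c: "c \<noteq> 0" "x = (c * (t * fst v), c * (t * fst (snd v)), c * (t * snd (snd v)))"
      unfolding proj_class_def sc3_def by auto
    show "x \<in> proj_class v"
      unfolding proj_class_def using c assms
      by (auto intro!: exI[of _ "c * t"] simp: mult.assoc)
  qed
  moreover have "proj_class v \<subseteq> proj_class (sc3 t v)"
  proof
    fix x assume "x \<in> proj_class v"
    then obtain c where c: "c \<noteq> 0" "x = (c * fst v, c * fst (snd v), c * snd (snd v))"
      unfolding proj_class_def by auto
    show "x \<in> proj_class (sc3 t v)"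
      unfolding proj_class_def sc3_def using c assms
      by (auto intro!: exI[of _ "c / t"])
  qed
  ultimately show ?thesis by blast
qed

lemma line_dot: "P \<in> line_of a \<Longrightarrow> v \<in> P \<Longrightarrow> dot3 a v = 0"
  unfolding line_of_def dot3_def by auto

lemma proj_dot:
  assumes "v \<noteq> (0,0,0)" "dot3 a v = 0"
  shows "proj_class v \<in> line_of a"
proof -
  have "proj_class v \<in> proj_points" using assms(1) unfolding proj_points_def by blast
  moreover have "\<forall>u\<in>proj_class v. dot3 a u = 0"
  proof
    fix u assume "u \<in> proj_class v"
    then obtain c where "u = sc3 c v" unfolding proj_class_def sc3_def by auto
    then have "dot3 a u = c * dot3 a v" by (simp add: dot3_def sc3_def algebra_simps)
    then show "dot3 a u = 0" using assms(2) by simp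
  qed
  ultimately show ?thesis unfolding line_of_def dot3_def by auto
qed

lemma line_unique:
  fixes L1 L2 :: "'k::field vec3 set set"
  assumes "is_line L1" "is_line L2" "P \<in> L1" "P \<in> L2" "Q \<in> L1" "Q \<in> L2" "P \<noteq> Q"
  shows "L1 = L2"
proof -
  obtain a where a: "a \<noteq> (0,0,0)" "L1 = line_of a" using assms(1) unfolding is_line_def by auto
  obtain b where b: "b \<noteq> (0,0,0)" "L2 = line_of b" using assms(2) unfolding is_line_def by auto
  have "P \<in> proj_points" using assms(3) a unfolding line_of_def by auto
  then obtain v where v: "v \<noteq> (0,0,0)" "P = proj_class v" unfolding proj_points_def by auto
  have "Q \<in> proj_points" using assms(5) a unfolding line_of_def by auto
  then obtain w where w: "w \<noteq> (0,0,0)" "Q = proj_class w" unfolding proj_points_def by auto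
  have d: "dot3 a v = 0" "dot3 a w = 0" "dot3 b v = 0" "dot3 b w = 0"
    using assms a b v w mem_proj_class line_dot by metis+
  have cne: "cross3 v w \<noteq> (0,0,0)"
  proof
    assume "cross3 v w = (0,0,0)"
    then have "cross3 w v = (0,0,0)"
      by (cases v; cases w) (auto simp: cross3_def algebra_simps)
    then obtain t where t: "w = sc3 t v" using par3 v(1) by blast
    then have "t \<noteq> 0" using w(1) by (auto simp: sc3_def)
    then have "Q = P" using t v w proj_class_sc by metis
    then show False using assms(7) by simp
  qed
  have "cross3 a (cross3 v w) = (0,0,0)" using d by (simp add: triple_cross)
  then obtain s where s: "a = sc3 s (cross3 v w)" using par3 cne by blast
  have "cross3 b (cross3 v w) = (0,0,0)" using d by (simp add: triple_cross)
  then obtain s' where s': "b = sc3 s' (cross3 v w)" using par3 cne by blast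
  have "s \<noteq> 0" using a s by (auto simp: sc3_def)
  have "s' \<noteq> 0" using b s' by (auto simp: sc3_def)
  have "\<And>u. dot3 a u = 0 \<longleftrightarrow> dot3 b u = 0"
    using s s' \<open>s \<noteq> 0\<close> \<open>s' \<noteq> 0\<close> by (simp add: dot_sc)
  then have "line_of a = line_of b" unfolding line_of_def dot3_def[symmetric] by auto
  then show ?thesis using a b by simp
qed

lemma card_inter_le1:
  fixes L M :: "'k::field vec3 set set"
  assumes "is_line L" "is_line M" "L \<noteq> M"
  shows "card (L \<inter> M) \<le> 1"
proof (cases "finite (L \<inter> M)")
  case True
  show ?thesis unfolding One_nat_def
    by (rule card_le_Suc0_iff_eq[OF True, THEN iffD2]) (use assms line_unique in blast)
qed simp



lemma line_through_eq:
  fixes L :: "'k::field vec3 set set"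
  assumes "is_line L" "P \<in> L" "Q \<in> L" "P \<noteq> Q"
  shows "L = line_through P Q"
  unfolding line_through_def
  by (rule the_equality[symmetric]) (use assms line_unique in blast)+

theorem lemma2p7:
  fixes X L :: "'k::alg_closed_field vec3 set set"
    and Xs Ls :: "nat \<Rightarrow> 'k vec3 set set"
    and P Q1 Q2 :: "'k vec3 set"
    and s :: nat
  assumes "s \<ge> 2"
    and "kconfig_defined_by X s (\<lambda>i. i) Xs Ls"
    and "Xs 1 = {P}" and "Xs 2 = {Q1, Q2}"
    and "is_line L" and "card (L \<inter> X) = s"
    and "L \<notin> Ls ` {1..s}"
  shows "L = line_through P Q1 \<or> L = line_through P Q2"
proof -
  note K = assms(2)[unfolded kconfig_defined_by_def]
  define f where "f i = card (L \<inter> Xs i)" for i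
  have fle: "f i \<le> 1" if "i \<in> {1..s}" for i
  proof -
    have ne: "L \<noteq> Ls i" using assms(7) that by blast
    have sub: "Xs i \<subseteq> Ls i" and li: "is_line (Ls i)" and fin: "finite (Xs i)"
      using K that by auto
    have "card (L \<inter> Xs i) \<le> Suc 0"
      by (rule card_le_Suc0_iff_eq[THEN iffD2]) (use fin ne sub li assms(5) line_unique in blast)+
    then show ?thesis unfolding f_def by simp
  qed
  have "L \<inter> X = (\<Union>i\<in>{1..s}. L \<inter> Xs i)" using K by auto
  then have "s \<le> sum f {1..s}" using assms(6) card_UN_le[of "{1..s}" "\<lambda>i. L \<inter> Xs i"]
    unfolding f_def by simp
  also have "sum f {1..s} = f 1 + f 2 + sum f {3..s}"
  proof -
    have "{1..s} = insert 1 (insert 2 {3..s})" using assms(1) by auto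
    then show ?thesis by simp
  qed
  also have "sum f {3..s} \<le> card {3..s} * 1"
    using sum_bounded_above[of "{3..s}" f 1] fle by auto
  finally have "s \<le> f 1 + f 2 + (s - 2)" by simp
  moreover have "f 1 \<le> 1" "f 2 \<le> 1" using fle assms(1) by auto
  ultimately have "f 1 = 1" "f 2 = 1" using assms(1) by linarith+
  then have "L \<inter> {P} \<noteq> {}" "L \<inter> {Q1, Q2} \<noteq> {}"
    unfolding f_def using assms(3,4) by force+
  then have P: "P \<in> L" and Q: "Q1 \<in> L \<or> Q2 \<in> L" by auto
  have two: "(2::nat) \<in> {1..s}" and one: "(1::nat) \<in> {1..s}" using assms(1) by auto
  have "Xs 2 \<subseteq> Ls 2" using K two by blast
  then have "Q1 \<in> Ls 2" "Q2 \<in> Ls 2" using assms(4) by auto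
  moreover have "Ls 2 \<inter> Xs 1 = {}" using K one two by (metis one_less_numeral_iff semiring_norm(76))
  ultimately have "P \<noteq> Q1" "P \<noteq> Q2" using assms(3) by auto
  then show ?thesis using P Q line_through_eq assms(5) by metis
qed

end
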